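(* Let $\Delta\in(0,1]$. There exist an MDP and a parameter space $\Theta=\{\theta_1,\theta_2\}$ with $D_{\mathrm{KL}}(p_{\theta_1}\|p_{\theta_2})<\infty$, $D_{\mathrm{KL}}(p_{\theta_2}\|p_{\theta_1})<\infty$ and $J(\theta_1)-J(\theta_2)=\Delta$ such that, for sufficiently large $n$, every algorithm for the online policy optimization problem suffers expected regret $\mathbb{E}R(n)\ge \frac{1}{32\Delta}$.
   Context: An MDP with state space $\mathcal S$, action space $\mathcal A$, transition kernel $P$, initial-state distribution $\mu$, reward function and horizon $H$ generates trajectories $\tau=(s_0,a_0,\dots,s_{H-1},a_{H-1})$ with return $\mathcal R(\tau)$. A parametric policy $\pi_\theta(\cdot|s)$, $\theta\in\Theta$, induces the trajectory distribution $p_\theta(\tau)=\mu(s_0)\prod_{h=0}^{H-1}\pi_\theta(a_h|s_h)P(s_{h+1}|s_h,a_h)$, and its expected return is $J(\theta)=\mathbb E_{\tau\sim p_\theta}[\mathcal R(\tau)]$. Online policy optimization (with mediator feedback): at each round $t=1,\dots,n$ the algorithm selects $\theta_t\in\Theta$ as a (possibly randomized) function of the history $\{(\theta_i,\tau_i,\mathcal R(\tau_i))\}_{i<t}$, executes $\pi_{\theta_t}$, and observes a trajectory $\tau_t\sim p_{\theta_t}$ and its return $\mathcal R(\tau_t)$. With $J^*=\sup_{\theta\in\Theta}J(\theta)$ and $\Delta(\theta)=J^*-J(\theta)$, the regret is $R(n)=\sum_{t=1}^n\Delta(\theta_t)$. $D_{\mathrm{KL}}$ denotes the Kullback–Leibler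 divergence. *)

theory Defs
  imports "HOL-Probability.Probability"
begin

text \<open>A trajectory is the list [(s_0,a_0),...,(s_{H-1},a_{H-1})].\<close>

fun traj_from :: "('s \<Rightarrow> 'a \<Rightarrow> 's pmf) \<Rightarrow> ('s \<Rightarrow> 'a pmf) \<Rightarrow> nat \<Rightarrow> 's \<Rightarrow> ('s \<times> 'a) list pmf" where
  "traj_from P pol 0 s = return_pmf []"
| "traj_from P pol (Suc h) s =
     pol s \<bind> (\<lambda>a. P s a \<bind> (\<lambda>s'. map_pmf (\<lambda>rest. (s, a) # rest) (traj_from P pol h s')))"

definition traj_dist :: "'s pmf \<Rightarrow> ('s \<Rightarrow> 'a \<Rightarrow> 's pmf) \<Rightarrow> ('s \<Rightarrow> 'a pmf) \<Rightarrow> nat \<Rightarrow> ('s \<times> 'a) list pmf" where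
  "traj_dist mu P pol H = mu \<bind> traj_from P pol H"

definition ret :: "('s \<Rightarrow> 'a \<Rightarrow> real) \<Rightarrow> ('s \<times> 'a) list \<Rightarrow> real" where
  "ret r tau = sum_list (map (\<lambda>(s, a). r s a) tau)"

definition Jret :: "'s pmf \<Rightarrow> ('s \<Rightarrow> 'a \<Rightarrow> 's pmf) \<Rightarrow> ('p \<Rightarrow> 's \<Rightarrow> 'a pmf) \<Rightarrow> ('s \<Rightarrow> 'a \<Rightarrow> real)
     \<Rightarrow> nat \<Rightarrow> 'p \<Rightarrow> real" where
  "Jret mu P pol r H theta = measure_pmf.expectation (traj_dist mu P (pol theta) H) (ret r)"

definition Jstar :: "'s pmf \<Rightarrow> ('s \<Rightarrow> 'a \<Rightarrow> 's pmf) \<Rightarrow> ('p \<Rightarrow> 's \<Rightarrow> 'a pmf) \<Rightarrow> ('s \<Rightarrow> 'a \<Rightarrow> real)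
     \<Rightarrow> nat \<Rightarrow> 'p set \<Rightarrow> real" where
  "Jstar mu P pol r H Theta = (SUP theta\<in>Theta. Jret mu P pol r H theta)"

definition gap :: "'s pmf \<Rightarrow> ('s \<Rightarrow> 'a \<Rightarrow> 's pmf) \<Rightarrow> ('p \<Rightarrow> 's \<Rightarrow> 'a pmf) \<Rightarrow> ('s \<Rightarrow> 'a \<Rightarrow> real)
     \<Rightarrow> nat \<Rightarrow> 'p set \<Rightarrow> 'p \<Rightarrow> real" where
  "gap mu P pol r H Theta theta = Jstar mu P pol r H Theta - Jret mu P pol r H theta"

text \<open>An (online, randomized) algorithm maps the history
  [(theta_1,tau_1,R(tau_1)),...,(theta_{t-1},tau_{t-1},R(tau_{t-1}))] to a distribution over
  the next parameter theta_t.\<close>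
type_synonym ('p, 's, 'a) history = "('p \<times> ('s \<times> 'a) list \<times> real) list"

fun run :: "'s pmf \<Rightarrow> ('s \<Rightarrow> 'a \<Rightarrow> 's pmf) \<Rightarrow> ('p \<Rightarrow> 's \<Rightarrow> 'a pmf) \<Rightarrow> ('s \<Rightarrow> 'a \<Rightarrow> real) \<Rightarrow> nat
     \<Rightarrow> (('p, 's, 'a) history \<Rightarrow> 'p pmf) \<Rightarrow> nat \<Rightarrow> ('p, 's, 'a) history pmf" where
  "run mu P pol r H alg 0 = return_pmf []"
| "run mu P pol r H alg (Suc t) =
     run mu P pol r H alg t \<bind> (\<lambda>hist. alg hist \<bind> (\<lambda>theta.
       map_pmf (\<lambda>tau. hist @ [(theta, tau, ret r tau)]) (traj_dist mu P (pol theta) H)))"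

definition exp_regret :: "'s pmf \<Rightarrow> ('s \<Rightarrow> 'a \<Rightarrow> 's pmf) \<Rightarrow> ('p \<Rightarrow> 's \<Rightarrow> 'a pmf) \<Rightarrow> ('s \<Rightarrow> 'a \<Rightarrow> real)
     \<Rightarrow> nat \<Rightarrow> 'p set \<Rightarrow> (('p, 's, 'a) history \<Rightarrow> 'p pmf) \<Rightarrow> nat \<Rightarrow> real" where
  "exp_regret mu P pol r H Theta alg n =
     measure_pmf.expectation (run mu P pol r H alg n)
       (\<lambda>hist. sum_list (map (\<lambda>x. gap mu P pol r H Theta (fst x)) hist))"

text \<open>Kullback-Leibler divergence of discrete distributions (natural log):
  sum_x p(x) ln(p(x)/q(x)); it is +infinity unless p is absolutely continuous w.r.t. q
  and the series converges (for real series, unconditional = absolute convergence;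
  the negative part is always summable, so divergence means +infinity).\<close>
definition KL_pmf :: "'x pmf \<Rightarrow> 'x pmf \<Rightarrow> ereal" where
  "KL_pmf p q =
     (if (\<forall>x. pmf q x = 0 \<longrightarrow> pmf p x = 0) \<and>
         (\<lambda>x. pmf p x * ln (pmf p x / pmf q x)) summable_on UNIV
      then ereal (\<Sum>\<^sub>\<infinity>x. pmf p x * ln (pmf p x / pmf q x))
      else \<infinity>)"

text \<open>Relabelling of the two parameters (the algorithm does not know which label is better).\<close>
definition relabel :: "'p \<Rightarrow> 'p \<Rightarrow> ('p \<Rightarrow> 'b) \<Rightarrow> 'p \<Rightarrow> 'b" where
  "relabel t1 t2 f = (\<lambda>t. if t = t1 then f t2 else if t = t2 then f t1 else f t)"

end

theory Submission
  imports Defs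
begin

fun zrun :: "(('p, 's, 'a) history \<Rightarrow> 'p pmf) \<Rightarrow> ('s \<times> 'a) list \<Rightarrow> real \<Rightarrow> nat \<Rightarrow> ('p, 's, 'a) history pmf" where
  "zrun alg z v 0 = return_pmf []"
| "zrun alg z v (Suc t) = zrun alg z v t \<bind> (\<lambda>h. map_pmf (\<lambda>\<theta>. h @ [(\<theta>, z, v)]) (alg h))"

lemma nn_ge_single: "(\<integral>\<^sup>+x. f x \<partial>measure_pmf M) \<ge> ennreal (pmf M z) * f z"
proof -
  have "(\<integral>\<^sup>+x. f x \<partial>measure_pmf M) \<ge> (\<integral>\<^sup>+x. f z * indicator {z} x \<partial>measure_pmf M)"
    by (intro nn_integral_mono) (auto simp: indicator_def)
  also have "(\<integral>\<^sup>+x. f z * indicator {z} x \<partial>measure_pmf M) = f z * emeasure M {z}"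
    by (simp add: nn_integral_cmult)
  finally show ?thesis by (simp add: emeasure_pmf_single mult.commute)
qed

lemma dom:
  assumes c: "0 \<le> c" and pz: "\<And>\<theta>. pmf (traj_dist mu P (pol \<theta>) H) z \<ge> c"
  shows "(\<integral>\<^sup>+h. f h \<partial>measure_pmf (run mu P pol r H alg t)) \<ge>
         ennreal (c ^ t) * (\<integral>\<^sup>+h. f h \<partial>measure_pmf (zrun alg z (ret r z) t))"
proof (induction t arbitrary: f)
  case 0
  then show ?case by simp
next
  case (Suc t)
  define G where "G h = (\<integral>\<^sup>+\<theta>. f (h @ [(\<theta>, z, ret r z)]) \<partial>measure_pmf (alg h))" for h
  have "ennreal (c ^ Suc t) * (\<integral>\<^sup>+h. f h \<partial>measure_pmf (zrun alg z (ret r z) (Suc t))) =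
     ennreal c * (ennreal (c ^ t) * (\<integral>\<^sup>+h. G h \<partial>measure_pmf (zrun alg z (ret r z) t)))"
    using c by (simp add: G_def ennreal_mult mult.assoc)
  also have "\<dots> \<le> ennreal c * (\<integral>\<^sup>+h. G h \<partial>measure_pmf (run mu P pol r H alg t))"
    by (intro mult_left_mono Suc) auto
  also have "\<dots> = (\<integral>\<^sup>+h. ennreal c * G h \<partial>measure_pmf (run mu P pol r H alg t))"
    by (simp add: nn_integral_cmult)
  also have "\<dots> \<le> (\<integral>\<^sup>+h. (\<integral>\<^sup>+\<theta>. (\<integral>\<^sup>+tau. f (h @ [(\<theta>, tau, ret r tau)]) \<partial>measure_pmf (traj_dist mu P (pol \<theta>) H)) \<partial>measure_pmf (alg h)) \<partial>measure_pmf (run mu P pol r H alg t))"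
  proof (intro nn_integral_mono)
    fix h
    have pt: "ennreal c * f (h @ [(\<theta>, z, ret r z)]) \<le> (\<integral>\<^sup>+tau. f (h @ [(\<theta>, tau, ret r tau)]) \<partial>measure_pmf (traj_dist mu P (pol \<theta>) H))" for \<theta>
    proof -
      have "(\<integral>\<^sup>+tau. f (h @ [(\<theta>, tau, ret r tau)]) \<partial>measure_pmf (traj_dist mu P (pol \<theta>) H))
         \<ge> ennreal (pmf (traj_dist mu P (pol \<theta>) H) z) * f (h @ [(\<theta>, z, ret r z)])"
        by (rule nn_ge_single)
      moreover have "ennreal (pmf (traj_dist mu P (pol \<theta>) H) z) * f (h @ [(\<theta>, z, ret r z)]) \<ge> ennreal c * f (h @ [(\<theta>, z, ret r z)])"
        by (intro mult_right_mono) (use pz in auto)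
      ultimately show ?thesis by order
    qed
    have "ennreal c * G h = (\<integral>\<^sup>+\<theta>. ennreal c * f (h @ [(\<theta>, z, ret r z)]) \<partial>measure_pmf (alg h))"
      unfolding G_def by (simp add: nn_integral_cmult)
    also have "\<dots> \<le> (\<integral>\<^sup>+\<theta>. (\<integral>\<^sup>+tau. f (h @ [(\<theta>, tau, ret r tau)]) \<partial>measure_pmf (traj_dist mu P (pol \<theta>) H)) \<partial>measure_pmf (alg h))"
      by (intro nn_integral_mono pt)
    finally show "ennreal c * G h \<le> (\<integral>\<^sup>+\<theta>. (\<integral>\<^sup>+tau. f (h @ [(\<theta>, tau, ret r tau)]) \<partial>measure_pmf (traj_dist mu P (pol \<theta>) H)) \<partial>measure_pmf (alg h))" .
  qed
  also have "\<dots> = (\<integral>\<^sup>+h. f h \<partial>measure_pmf (run mu P pol r H alg (Suc t)))"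
    by simp
  finally show ?case .
qed


lemma run_len: "h \<in> set_pmf (run mu P pol r H alg t) \<Longrightarrow> length h = t"
  by (induction t arbitrary: h) auto

lemma zrun_len: "h \<in> set_pmf (zrun alg z v t) \<Longrightarrow> length h = t"
  by (induction t arbitrary: h) auto

lemma run_mono1:
  assumes "\<And>h x. F h \<le> F (h @ [x])"
  shows "(\<integral>\<^sup>+h. F h \<partial>measure_pmf (run mu P pol r H alg t)) \<le> (\<integral>\<^sup>+h. F h \<partial>measure_pmf (run mu P pol r H alg (Suc t)))"
proof -
  have "(\<integral>\<^sup>+h. F h \<partial>measure_pmf (run mu P pol r H alg t)) =
    (\<integral>\<^sup>+h. (\<integral>\<^sup>+\<theta>. (\<integral>\<^sup>+tau. F h \<partial>measure_pmf (traj_dist mu P (pol \<theta>) H)) \<partial>measure_pmf (alg h)) \<partial>measure_pmf (run mu P pol r H alg t))"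
    by simp
  also have "\<dots> \<le> (\<integral>\<^sup>+h. (\<integral>\<^sup>+\<theta>. (\<integral>\<^sup>+tau. F (h @ [(\<theta>, tau, ret r tau)]) \<partial>measure_pmf (traj_dist mu P (pol \<theta>) H)) \<partial>measure_pmf (alg h)) \<partial>measure_pmf (run mu P pol r H alg t))"
    by (intro nn_integral_mono assms)
  also have "\<dots> = (\<integral>\<^sup>+h. F h \<partial>measure_pmf (run mu P pol r H alg (Suc t)))"
    by simp
  finally show ?thesis .
qed

lemma run_mono:
  assumes "\<And>h x. F h \<le> F (h @ [x])" and "k \<le> n"
  shows "(\<integral>\<^sup>+h. F h \<partial>measure_pmf (run mu P pol r H alg k)) \<le> (\<integral>\<^sup>+h. F h \<partial>measure_pmf (run mu P pol r H alg n))"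
  using assms(2)
proof (induction n rule: dec_induct)
  case base then show ?case by simp
next
  case (step n) then show ?case using run_mono1[OF assms(1), of mu P pol r H alg n] by order
qed

definition pol_of :: "(real \<Rightarrow> real) \<Rightarrow> real \<Rightarrow> nat \<Rightarrow> nat pmf" where
  "pol_of q \<theta> s = map_pmf (\<lambda>b. if b then 1 else 0) (bernoulli_pmf (q \<theta>))"

lemma traj_eq: "traj_dist (return_pmf 0) (\<lambda>_ _. return_pmf 0) (pol_of q \<theta>) (Suc 0) =
   map_pmf (\<lambda>b. [(0::nat, if b then 1::nat else 0)]) (bernoulli_pmf (q \<theta>))"
  unfolding traj_dist_def pol_of_def
  by (simp add: bind_return_pmf map_pmf_def bind_assoc_pmf)

lemma J_eq:
  assumes "0 \<le> q \<theta>" "q \<theta> \<le> 1"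
  shows "Jret (return_pmf 0) (\<lambda>_ _. return_pmf 0) (pol_of q) (\<lambda>s a. real a * M) (Suc 0) \<theta> = q \<theta> * M"
  unfolding Jret_def traj_eq using assms by (simp add: ret_def)

lemma relabel_pol: "relabel 1 0 (pol_of q) = pol_of (relabel 1 0 q)"
  unfolding relabel_def by (rule ext) (simp add: pol_of_def[abs_def])


lemma pmf_zero_traj:
  assumes "0 \<le> q \<theta>" "q \<theta> \<le> 1"
  shows "pmf (traj_dist (return_pmf 0) (\<lambda>_ _. return_pmf 0) (pol_of q \<theta>) (Suc 0)) [(0, 0)] = 1 - q \<theta>"
proof -
  have inj: "inj (\<lambda>b. [(0::nat, if b then 1::nat else 0)])" by (auto simp: inj_def split: if_splits)
  have "pmf (map_pmf (\<lambda>b. [(0::nat, if b then 1::nat else 0)]) (bernoulli_pmf (q \<theta>))) ((\<lambda>b. [(0::nat, if b then 1::nat else 0)]) False) = pmf (bernoulli_pmf (q \<theta>)) False"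
    by (rule pmf_map_inj'[OF inj])
  then show ?thesis unfolding traj_eq using assms by simp
qed

lemma sum_list_bounds:
  fixes f :: "'x \<Rightarrow> real"
  assumes "\<And>x. 0 \<le> f x \<and> f x \<le> D"
  shows "0 \<le> sum_list (map f h) \<and> sum_list (map f h) \<le> D * real (length h)"
proof (induction h)
  case Nil then show ?case by simp
next
  case (Cons a h)
  have "0 \<le> f a \<and> f a \<le> D" by (rule assms)
  with Cons show ?case by (simp add: algebra_simps)
qed

lemma sum_list_two:
  fixes f g :: "'x \<Rightarrow> real"
  assumes "\<And>x. D \<le> f x + g x"
  shows "D * real (length h) \<le> sum_list (map f h) + sum_list (map g h)"
proof (induction h)
  case Nil then show ?case by simp
next
  case (Cons a h)
  have "D \<le> f a + g a" by (rule assms)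
  with Cons show ?case by (simp add: algebra_simps)
qed

lemma regret_nn:
  assumes "\<And>\<theta>. 0 \<le> gap mu P pol r H Th \<theta> \<and> gap mu P pol r H Th \<theta> \<le> D"
  shows "exp_regret mu P pol r H Th alg n =
     enn2real (\<integral>\<^sup>+h. ennreal (sum_list (map (\<lambda>x. gap mu P pol r H Th (fst x)) h)) \<partial>measure_pmf (run mu P pol r H alg n))"
    and "(\<integral>\<^sup>+h. ennreal (sum_list (map (\<lambda>x. gap mu P pol r H Th (fst x)) h)) \<partial>measure_pmf (run mu P pol r H alg n)) \<le> ennreal (D * real n)"
proof -
  let ?g = "\<lambda>x. gap mu P pol r H Th (fst x)"
  have a': "\<And>x. 0 \<le> ?g x \<and> ?g x \<le> D" using assms by simp
  note b = sum_list_bounds[of ?g D, OF a']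
  show "exp_regret mu P pol r H Th alg n =
     enn2real (\<integral>\<^sup>+h. ennreal (sum_list (map ?g h)) \<partial>measure_pmf (run mu P pol r H alg n))"
    unfolding exp_regret_def by (rule integral_eq_nn_integral) (use b in auto)
  have "(\<integral>\<^sup>+h. ennreal (sum_list (map ?g h)) \<partial>measure_pmf (run mu P pol r H alg n)) \<le>
      (\<integral>\<^sup>+h. ennreal (D * real n) \<partial>measure_pmf (run mu P pol r H alg n))"
  proof (intro nn_integral_mono_AE AE_pmfI ennreal_leI)
    fix y assume "y \<in> set_pmf (run mu P pol r H alg n)"
    then have "length y = n" by (rule run_len)
    then show "sum_list (map ?g y) \<le> D * real n" using b[of y] by simp
  qed
  then show "(\<integral>\<^sup>+h. ennreal (sum_list (map ?g h)) \<partial>measure_pmf (run mu P pol r H alg n)) \<le> ennreal (D * real n)"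
    by simp
qed


lemma KL_fin:
  assumes "set_pmf p = S" "set_pmf q = S" "finite S"
  shows "KL_pmf p q < \<infinity>"
proof -
  let ?f = "\<lambda>x. pmf p x * ln (pmf p x / pmf q x)"
  have c1: "\<forall>x. pmf q x = 0 \<longrightarrow> pmf p x = 0" using assms by (simp add: pmf_eq_0_set_pmf)
  have "?f summable_on UNIV \<longleftrightarrow> ?f summable_on S"
    by (rule summable_on_cong_neutral) (use assms in \<open>auto simp: pmf_eq_0_set_pmf\<close>)
  then have "?f summable_on UNIV" using assms(3) by simp
  with c1 show ?thesis unfolding KL_pmf_def by simp
qed

lemma set_traj:
  assumes "0 < q \<theta>" "q \<theta> < 1"
  shows "set_pmf (traj_dist (return_pmf 0) (\<lambda>_ _. return_pmf 0) (pol_of q \<theta>) (Suc 0)) = {[(0, 0)], [(0, 1)]}"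
  unfolding traj_eq using assms by (auto split: if_splits)

lemma int_traj:
  fixes f :: "(nat \<times> nat) list \<Rightarrow> real"
  shows "integrable (measure_pmf (traj_dist (return_pmf 0) (\<lambda>_ _. return_pmf 0) (pol_of q \<theta>) (Suc 0))) f"
  unfolding traj_eq by (rule integrable_measure_pmf_finite) simp

theorem theorem1:
  fixes \<Delta> :: real
  assumes "0 < \<Delta>" and "\<Delta> \<le> 1"
  shows "\<exists>(mu :: nat pmf) (P :: nat \<Rightarrow> nat \<Rightarrow> nat pmf) (pol :: real \<Rightarrow> nat \<Rightarrow> nat pmf)
            (r :: nat \<Rightarrow> nat \<Rightarrow> real) (H :: nat) (\<theta>\<^sub>1 :: real) (\<theta>\<^sub>2 :: real).
     \<theta>\<^sub>1 \<noteq> \<theta>\<^sub>2 \<and>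
     (\<forall>\<theta>\<in>{\<theta>\<^sub>1, \<theta>\<^sub>2}. integrable (measure_pmf (traj_dist mu P (pol \<theta>) H)) (ret r)) \<and>
     KL_pmf (traj_dist mu P (pol \<theta>\<^sub>1) H) (traj_dist mu P (pol \<theta>\<^sub>2) H) < \<infinity> \<and>
     KL_pmf (traj_dist mu P (pol \<theta>\<^sub>2) H) (traj_dist mu P (pol \<theta>\<^sub>1) H) < \<infinity> \<and>
     Jret mu P pol r H \<theta>\<^sub>1 - Jret mu P pol r H \<theta>\<^sub>2 = \<Delta> \<and>
     (\<exists>N. \<forall>n\<ge>N. \<forall>alg :: (real, nat, nat) history \<Rightarrow> real pmf.
        (\<forall>hist. set_pmf (alg hist) \<subseteq> {\<theta>\<^sub>1, \<theta>\<^sub>2}) \<longrightarrow>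
        max (exp_regret mu P pol r H {\<theta>\<^sub>1, \<theta>\<^sub>2} alg n)
            (exp_regret mu P (relabel \<theta>\<^sub>1 \<theta>\<^sub>2 pol) r H {\<theta>\<^sub>1, \<theta>\<^sub>2} alg n)
          \<ge> 1 / (32 * \<Delta>))"
proof -
  define k where "k = nat \<lceil>1 / \<Delta>\<^sup>2\<rceil>"
  define e where "e = 1 / (4 * (real k + 1))"
  define M where "M = \<Delta> / e"
  define q where "q = (\<lambda>\<theta>::real. if \<theta> = 1 then 2 * e else e)"
  define q2 where "q2 = relabel 1 0 q"
  define mu where "mu = return_pmf (0::nat)"
  define P where "P = (\<lambda>(_::nat) (_::nat). return_pmf (0::nat))"
  define r where "r = (\<lambda>(s::nat) (a::nat). real a * M)"
  have e: "0 < e" "2 * e < 1" unfolding e_def by (auto simp: field_simps)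
  have eM: "e * M = \<Delta>" unfolding M_def using e by simp
  have Mpos: "0 < M" unfolding M_def using e assms by simp
  have qb: "e \<le> q \<theta> \<and> q \<theta> \<le> 2 * e" for \<theta> unfolding q_def using e by auto
  have q2b: "e \<le> q2 \<theta> \<and> q2 \<theta> \<le> 2 * e" for \<theta> unfolding q2_def relabel_def q_def using e by auto
  have J1: "Jret mu P (pol_of q) r (Suc 0) \<theta> = q \<theta> * M" for \<theta>
    unfolding mu_def P_def r_def by (rule J_eq) (use qb[of \<theta>] e in auto)
  have J2: "Jret mu P (pol_of q2) r (Suc 0) \<theta> = q2 \<theta> * M" for \<theta>
    unfolding mu_def P_def r_def by (rule J_eq) (use q2b[of \<theta>] e in auto)
  have eMle: "e * M \<le> 2 * e * M" using e Mpos by simp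
  have JS1: "Jstar mu P (pol_of q) r (Suc 0) {1, 0} = 2 * e * M"
  proof -
    have "Sup {2 * e * M, e * M} = 2 * e * M" by (rule cSup_eq_maximum) (use eMle in auto)
    then show ?thesis unfolding Jstar_def J1 by (simp add: q_def)
  qed
  have JS2: "Jstar mu P (pol_of q2) r (Suc 0) {1, 0} = 2 * e * M"
  proof -
    have "Sup {e * M, 2 * e * M} = 2 * e * M" by (rule cSup_eq_maximum) (use eMle in auto)
    then show ?thesis unfolding Jstar_def J2 by (simp add: q2_def q_def relabel_def)
  qed
  define g1 where "g1 = gap mu P (pol_of q) r (Suc 0) {1, 0}"
  define g2 where "g2 = gap mu P (pol_of q2) r (Suc 0) {1, 0}"
  have g1: "g1 \<theta> = (if \<theta> = 1 then 0 else \<Delta>)" for \<theta>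
    unfolding g1_def gap_def JS1 J1 using eM by (auto simp: algebra_simps q_def)
  have g2: "g2 \<theta> = (if \<theta> = 0 then 0 else \<Delta>)" for \<theta>
    unfolding g2_def gap_def JS2 J2 using eM by (auto simp: algebra_simps q2_def q_def relabel_def)
  have g1b: "0 \<le> g1 \<theta> \<and> g1 \<theta> \<le> \<Delta>" for \<theta> using g1 assms by auto
  have g2b: "0 \<le> g2 \<theta> \<and> g2 \<theta> \<le> \<Delta>" for \<theta> using g2 assms by auto
  have g12: "\<Delta> \<le> g1 \<theta> + g2 \<theta>" for \<theta> using g1 g2 assms by auto
  define c where "c = 1 - 2 * e"
  have c0: "0 \<le> c" using e unfolding c_def by simp
  have ck: "1 / 2 \<le> c ^ k"
  proof -
    have "1 + real k * (- 2 * e) \<le> (1 + (- 2 * e)) ^ k"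
      by (rule Bernoulli_inequality) (use e in simp)
    moreover have "real k * (2 * e) \<le> 1 / 2" unfolding e_def by (simp add: field_simps)
    ultimately show ?thesis unfolding c_def by simp
  qed
  have kD: "1 / \<Delta> \<le> \<Delta> * real k"
  proof -
    have "1 / \<Delta>\<^sup>2 \<le> real k" unfolding k_def by linarith
    then have "\<Delta> * (1 / \<Delta>\<^sup>2) \<le> \<Delta> * real k" using assms by (intro mult_left_mono) auto
    then show ?thesis using assms by (simp add: power2_eq_square)
  qed
  define z where "z = [(0::nat, 0::nat)]"
  have pz1: "c \<le> pmf (traj_dist mu P (pol_of q \<theta>) (Suc 0)) z" for \<theta>
    unfolding mu_def P_def z_def c_def using pmf_zero_traj[of q \<theta>] qb[of \<theta>] e by simp
  have pz2: "c \<le> pmf (traj_dist mu P (pol_of q2 \<theta>) (Suc 0)) z" for \<theta>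
    unfolding mu_def P_def z_def c_def using pmf_zero_traj[of q2 \<theta>] q2b[of \<theta>] e by simp
  have main: "1 / (32 * \<Delta>) \<le> max (exp_regret mu P (pol_of q) r (Suc 0) {1, 0} alg n)
            (exp_regret mu P (pol_of q2) r (Suc 0) {1, 0} alg n)" if "k \<le> n" for n alg
  proof -
    define S1 where "S1 h = ennreal (sum_list (map (\<lambda>x. g1 (fst x)) h))" for h :: "(real, nat, nat) history"
    define S2 where "S2 h = ennreal (sum_list (map (\<lambda>x. g2 (fst x)) h))" for h :: "(real, nat, nat) history"
    define I1 where "I1 t = (\<integral>\<^sup>+h. S1 h \<partial>measure_pmf (run mu P (pol_of q) r (Suc 0) alg t))" for t
    define I2 where "I2 t = (\<integral>\<^sup>+h. S2 h \<partial>measure_pmf (run mu P (pol_of q2) r (Suc 0) alg t))" for t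
    define Z1 where "Z1 = (\<integral>\<^sup>+h. S1 h \<partial>measure_pmf (zrun alg z (ret r z) k))"
    define Z2 where "Z2 = (\<integral>\<^sup>+h. S2 h \<partial>measure_pmf (zrun alg z (ret r z) k))"
    have E1: "exp_regret mu P (pol_of q) r (Suc 0) {1, 0} alg n = enn2real (I1 n)"
      and I1b: "I1 n \<le> ennreal (\<Delta> * real n)"
      using regret_nn[of mu P "pol_of q" r "Suc 0" "{1,0}" \<Delta> alg n] g1b
      unfolding I1_def S1_def g1_def by auto
    have E2: "exp_regret mu P (pol_of q2) r (Suc 0) {1, 0} alg n = enn2real (I2 n)"
      and I2b: "I2 n \<le> ennreal (\<Delta> * real n)"
      using regret_nn[of mu P "pol_of q2" r "Suc 0" "{1,0}" \<Delta> alg n] g2b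
      unfolding I2_def S2_def g2_def by auto
    have m1: "I1 k \<le> I1 n" unfolding I1_def
      by (rule run_mono[OF _ that]) (use g1b in \<open>auto simp: S1_def intro!: ennreal_leI\<close>)
    have m2: "I2 k \<le> I2 n" unfolding I2_def
      by (rule run_mono[OF _ that]) (use g2b in \<open>auto simp: S2_def intro!: ennreal_leI\<close>)
    have d1: "ennreal (c ^ k) * Z1 \<le> I1 k" unfolding I1_def Z1_def
      by (rule dom[OF c0 pz1])
    have d2: "ennreal (c ^ k) * Z2 \<le> I2 k" unfolding I2_def Z2_def
      by (rule dom[OF c0 pz2])
    have "Z1 + Z2 = (\<integral>\<^sup>+h. S1 h + S2 h \<partial>measure_pmf (zrun alg z (ret r z) k))"
      unfolding Z1_def Z2_def by (rule nn_integral_add[symmetric]) auto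
    also have "\<dots> \<ge> (\<integral>\<^sup>+h. ennreal (\<Delta> * real k) \<partial>measure_pmf (zrun alg z (ret r z) k))"
    proof (intro nn_integral_mono_AE AE_pmfI)
      fix y assume "y \<in> set_pmf (zrun alg z (ret r z) k)"
      then have "length y = k" by (rule zrun_len)
      moreover have "\<Delta> * real (length y) \<le> sum_list (map (\<lambda>x. g1 (fst x)) y) + sum_list (map (\<lambda>x. g2 (fst x)) y)"
        by (rule sum_list_two) (rule g12)
      moreover have "0 \<le> sum_list (map (\<lambda>x. g1 (fst x)) y)" "0 \<le> sum_list (map (\<lambda>x. g2 (fst x)) y)"
        using sum_list_bounds[of "\<lambda>x. g1 (fst x)" \<Delta> y] sum_list_bounds[of "\<lambda>x. g2 (fst x)" \<Delta> y] g1b g2b by auto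
      ultimately show "ennreal (\<Delta> * real k) \<le> S1 y + S2 y"
        unfolding S1_def S2_def by (simp add: ennreal_plus[symmetric] del: ennreal_plus)
    qed
    finally have Zb: "ennreal (\<Delta> * real k) \<le> Z1 + Z2" by simp
    have "ennreal (c ^ k * (\<Delta> * real k)) = ennreal (c ^ k) * ennreal (\<Delta> * real k)"
      using c0 assms by (simp add: ennreal_mult)
    also have "\<dots> \<le> ennreal (c ^ k) * (Z1 + Z2)" by (rule mult_left_mono[OF Zb]) simp
    also have "\<dots> = ennreal (c ^ k) * Z1 + ennreal (c ^ k) * Z2" by (simp add: distrib_left)
    also have "\<dots> \<le> I1 n + I2 n" using d1 d2 m1 m2 by (meson add_mono order_trans)
    finally have tot: "ennreal (c ^ k * (\<Delta> * real k)) \<le> I1 n + I2 n" .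
    have f1: "I1 n < \<top>" using I1b by (simp add: order_le_less_trans)
    have f2: "I2 n < \<top>" using I2b by (simp add: order_le_less_trans)
    have "c ^ k * (\<Delta> * real k) \<le> enn2real (I1 n + I2 n)"
      using enn2real_mono[OF tot] f1 f2 c0 assms by simp
    also have "\<dots> = enn2real (I1 n) + enn2real (I2 n)" using f1 f2 by (simp add: enn2real_plus)
    finally have sum: "c ^ k * (\<Delta> * real k) \<le> enn2real (I1 n) + enn2real (I2 n)" .
    have "1 / 2 * (1 / \<Delta>) \<le> c ^ k * (\<Delta> * real k)"
      by (rule mult_mono[OF ck kD]) (use c0 assms in auto)
    then have "1 / (2 * \<Delta>) \<le> enn2real (I1 n) + enn2real (I2 n)" using sum by simp
    moreover have "1 / (32 * \<Delta>) \<le> 1 / (4 * \<Delta>)" using assms by (simp add: field_simps)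
    moreover have "enn2real (I1 n) \<le> max (enn2real (I1 n)) (enn2real (I2 n))"
      "enn2real (I2 n) \<le> max (enn2real (I1 n)) (enn2real (I2 n))" by auto
    moreover have "1 / (4 * \<Delta>) = (1 / (2 * \<Delta>)) / 2" by simp
    ultimately show ?thesis unfolding E1 E2 by linarith
  qed
  show ?thesis
  proof (intro exI conjI)
    show "(1::real) \<noteq> 0" by simp
    show "\<forall>\<theta>\<in>{1, 0}. integrable (measure_pmf (traj_dist mu P (pol_of q \<theta>) (Suc 0))) (ret r)"
      unfolding mu_def P_def using int_traj by blast
    have st: "set_pmf (traj_dist mu P (pol_of q \<theta>) (Suc 0)) = {[(0, 0)], [(0, 1)]}" for \<theta>
      unfolding mu_def P_def by (rule set_traj) (use qb[of \<theta>] e in auto)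
    show "KL_pmf (traj_dist mu P (pol_of q 1) (Suc 0)) (traj_dist mu P (pol_of q 0) (Suc 0)) < \<infinity>"
      by (rule KL_fin[OF st st]) simp
    show "KL_pmf (traj_dist mu P (pol_of q 0) (Suc 0)) (traj_dist mu P (pol_of q 1) (Suc 0)) < \<infinity>"
      by (rule KL_fin[OF st st]) simp
    show "Jret mu P (pol_of q) r (Suc 0) 1 - Jret mu P (pol_of q) r (Suc 0) 0 = \<Delta>"
      unfolding J1 using eM by (simp add: algebra_simps q_def)
    show "\<forall>n\<ge>k. \<forall>alg :: (real, nat, nat) history \<Rightarrow> real pmf.
        (\<forall>hist. set_pmf (alg hist) \<subseteq> {1, 0}) \<longrightarrow>
        max (exp_regret mu P (pol_of q) r (Suc 0) {1, 0} alg n)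
            (exp_regret mu P (relabel 1 0 (pol_of q)) r (Suc 0) {1, 0} alg n)
          \<ge> 1 / (32 * \<Delta>)"
      using main unfolding relabel_pol q2_def[symmetric] by blast
  qed
qed

end
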